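(* Let $n\ge 2$ be an integer and let $x_1,\dots,x_n>0$ satisfy $\frac1n\sum_{i=1}^n\frac1{x_i}=1$. Then \[ \frac1n\sum_{i=1}^n x_i\le\prod_{i=1}^n x_i, \] with equality if and only if $x_1=\cdots=x_n=1$ when $n\ge3$; when $n=2$, equality holds for all such $x_1,x_2$. *)

theory Defs
  imports Complex_Main
begin

end

theory Submission
  imports Defs
begin

lemma ln_strict: "0 < (x::real) \<Longrightarrow> x \<noteq> 1 \<Longrightarrow> ln x < x - 1"
  using ln_le_minus_one ln_eq_minus_one by fastforce

lemma amgm:
  fixes y :: "nat \<Rightarrow> real" and n :: nat
  assumes n: "n \<ge> 1" and pos: "\<And>i. i \<in> {1..n} \<Longrightarrow> y i > 0"
  shows "(\<Prod>i=1..n. y i) \<le> ((\<Sum>i=1..n. y i) / n) ^ n"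
    and "(\<Prod>i=1..n. y i) = ((\<Sum>i=1..n. y i) / n) ^ n \<Longrightarrow> \<forall>i\<in>{1..n}. y i = (\<Sum>i=1..n. y i) / n"
proof -
  define A where "A = (\<Sum>i=1..n. y i) / n"
  have sp: "(\<Sum>i=1..n. y i) > 0" using n pos by (intro sum_pos) auto
  have A: "A > 0" using sp n unfolding A_def by auto
  have sumA: "(\<Sum>i=1..n. y i / A - 1) = 0"
  proof -
    have "(\<Sum>i=1..n. y i / A - 1) = (\<Sum>i=1..n. y i) / A - n"
      by (simp add: sum_subtractf sum_divide_distrib)
    also have "\<dots> = 0" using A n unfolding A_def by (simp add: field_simps)
    finally show ?thesis .
  qed
  have pr: "(\<Prod>i=1..n. y i) = A ^ n * exp (\<Sum>i=1..n. ln (y i / A))"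
  proof -
    have "exp (\<Sum>i=1..n. ln (y i / A)) = (\<Prod>i=1..n. y i / A)"
      using pos A by (subst ln_prod[symmetric]) (auto intro!: prod_pos, fastforce)
    also have "\<dots> = (\<Prod>i=1..n. y i) / A ^ n" by (simp add: prod_dividef)
    finally show ?thesis using A by simp
  qed
  have le: "(\<Sum>i=1..n. ln (y i / A)) \<le> 0"
    using sumA sum_mono[of "{1..n}" "\<lambda>i. ln (y i / A)" "\<lambda>i. y i / A - 1"] pos A ln_le_minus_one
    by fastforce
  show "(\<Prod>i=1..n. y i) \<le> ((\<Sum>i=1..n. y i) / n) ^ n"
    using pr le A unfolding A_def[symmetric] by (simp add: mult_le_cancel_left1)
  assume eq: "(\<Prod>i=1..n. y i) = ((\<Sum>i=1..n. y i) / n) ^ n"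
  show "\<forall>i\<in>{1..n}. y i = (\<Sum>i=1..n. y i) / n"
  proof (rule ccontr)
    assume "\<not> ?thesis"
    then obtain k where k: "k \<in> {1..n}" "y k \<noteq> A" unfolding A_def by auto
    have "(\<Sum>i=1..n. ln (y i / A)) < (\<Sum>i=1..n. y i / A - 1)"
    proof (rule sum_strict_mono_ex1)
      show "\<forall>x\<in>{1..n}. ln (y x / A) \<le> y x / A - 1" using pos A ln_le_minus_one by auto
      show "\<exists>a\<in>{1..n}. ln (y a / A) < y a / A - 1"
        using k pos[of k] A by (intro bexI[of _ k] ln_strict) auto
    qed auto
    hence "exp (\<Sum>i=1..n. ln (y i / A)) < 1" using sumA by simp
    hence "(\<Prod>i=1..n. y i) < A ^ n" using pr A by simp
    thus False using eq unfolding A_def by simp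
  qed
qed

lemma amgm2:
  fixes a b :: real and n :: nat
  assumes "n \<ge> 2" "a > 0" "b > 0"
  shows "a ^ (n - 1) * b \<le> (((n - 1) * a + b) / n) ^ n"
    and "a ^ (n - 1) * b = (((n - 1) * a + b) / n) ^ n \<Longrightarrow> a = b"
proof -
  define y where "y = (\<lambda>i::nat. if i = n then b else a)"
  have pos: "\<And>i. i \<in> {1..n} \<Longrightarrow> y i > 0" using assms unfolding y_def by auto
  have s1: "{1..n} = insert n {1..n-1}" using assms by auto
  have P0: "(\<Prod>i=1..n-1. y i) = a ^ (n - 1)"
    by (subst prod.cong[of _ _ _ "\<lambda>_. a"]) (auto simp: y_def)
  have P: "(\<Prod>i=1..n. y i) = a ^ (n - 1) * b"
    unfolding s1 using P0 by (subst prod.insert) (auto simp: y_def)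
  have S0: "(\<Sum>i=1..n-1. y i) = (n - 1) * a"
    using assms by (subst sum.cong[of _ _ _ "\<lambda>_. a"]) (auto simp: y_def of_nat_diff)
  have S: "(\<Sum>i=1..n. y i) = (n - 1) * a + b"
    unfolding s1 using assms S0 by (subst sum.insert) (auto simp: y_def of_nat_diff)
  note r = amgm[of n y, OF _ pos, unfolded P S]
  show "a ^ (n - 1) * b \<le> (((n - 1) * a + b) / n) ^ n" using r(1) assms by simp
  assume "a ^ (n - 1) * b = (((n - 1) * a + b) / n) ^ n"
  hence "\<forall>i\<in>{1..n}. y i = ((n - 1) * a + b) / n" using r(2) assms by simp
  hence "y 1 = y n" using assms by auto
  thus "a = b" using assms unfolding y_def by auto
qed

lemma alg1: "(N::real) > 0 \<Longrightarrow> ((N - 1) * a + (N * t + a) / (N + 1)) / N = (N * a + t) / (N + 1)"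
proof -
  assume N: "N > 0"
  have "(N - 1) * a + (N * t + a) / (N + 1) = ((N - 1) * a * (N + 1) + (N * t + a)) / (N + 1)"
    using N by (simp add: field_simps)
  also have "(N - 1) * a * (N + 1) + (N * t + a) = N * (N * a + t)" by (simp add: algebra_simps)
  finally show ?thesis using N by simp
qed

lemma mainlem:
  fixes y :: "nat \<Rightarrow> real" and n :: nat
  assumes "n \<ge> 2"
  shows "(\<And>i. i \<in> {1..n} \<Longrightarrow> y i > 0) \<Longrightarrow>
    (\<Prod>i=1..n. y i) * (\<Sum>i=1..n. 1 / y i) \<le> n * ((\<Sum>i=1..n. y i) / n) ^ (n - 1) \<and>
    (n \<ge> 3 \<and> (\<Prod>i=1..n. y i) * (\<Sum>i=1..n. 1 / y i) = n * ((\<Sum>i=1..n. y i) / n) ^ (n - 1)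
       \<longrightarrow> (\<forall>i\<in>{1..n}. y i = (\<Sum>i=1..n. y i) / n))"
  using assms
proof (induction n rule: nat_induct_at_least)
  case base
  have y: "y 1 > 0" "y 2 > 0" using base by auto
  have e: "{1..2::nat} = {1, 2}" by auto
  have "(\<Prod>i=1..2. y i) * (\<Sum>i=1..2. 1 / y i) = y 1 + y 2"
    unfolding e using y by (simp add: field_simps)
  moreover have "real 2 * ((\<Sum>i=1..2. y i) / real 2) ^ (2 - 1) = y 1 + y 2"
    unfolding e by simp
  ultimately show ?case by simp
next
  case (Suc n)
  define s where "s = (\<Sum>i=1..n. y i)"
  define P where "P = (\<Prod>i=1..n. y i)"
  define H where "H = (\<Sum>i=1..n. 1 / y i)"
  define t where "t = y (Suc n)"
  define a where "a = s / n"
  define b where "b = (n * t + a) / (n + 1)"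
  have pos: "\<And>i. i \<in> {1..n} \<Longrightarrow> y i > 0" using Suc.prems by auto
  have t: "t > 0" using Suc.prems unfolding t_def by auto
  have IH: "P * H \<le> n * a ^ (n - 1)" unfolding P_def H_def a_def s_def using conjunct1[OF Suc.IH[OF pos]] .
  have sp: "s > 0" unfolding s_def using pos Suc.hyps by (intro sum_pos) auto
  have a: "a > 0" using sp Suc.hyps unfolding a_def by auto
  have b: "b > 0" using a t unfolding b_def by (intro divide_pos_pos add_nonneg_pos mult_nonneg_nonneg) auto
  have n1: "1 \<le> n" using Suc.hyps by simp
  have AG: "P \<le> a ^ n" unfolding P_def a_def s_def by (rule amgm(1)[OF n1 pos])
  have AGe: "P = a ^ n \<Longrightarrow> \<forall>i\<in>{1..n}. y i = a" unfolding P_def a_def s_def by (rule amgm(2)[OF n1 pos])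
  have A2: "a ^ (n - 1) * b \<le> (((n - 1) * a + b) / n) ^ n" by (rule amgm2(1)[OF Suc.hyps a b])
  have A2e: "a ^ (n - 1) * b = (((n - 1) * a + b) / n) ^ n \<Longrightarrow> a = b" by (rule amgm2(2)[OF Suc.hyps a b])
  have nr: "real (n - 1) = real n - 1" using n1 by (simp add: of_nat_diff)
  have n0: "real n > 0" using n1 by simp
  have sna: "s = n * a" using n0 unfolding a_def by simp
  have M: "((n - 1) * a + b) / n = (s + t) / (n + 1)"
    unfolding b_def nr sna using alg1[OF n0, of a t] by (simp add: add.commute)
  have Pn: "n - 1 + 1 = n" using Suc.hyps by simp
  have E1: "t * (n * a ^ (n - 1)) + a ^ n = (n + 1) * (a ^ (n - 1) * b)"
  proof -
    have "a ^ n = a ^ (n - 1) * a" using Pn by (metis power_Suc2 Suc_eq_plus1)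
    moreover have "(n + 1) * (a ^ (n - 1) * b) = a ^ (n - 1) * (n * t + a)"
      unfolding b_def by simp
    ultimately show ?thesis by (simp add: algebra_simps)
  qed
  have L: "(\<Prod>i=1..Suc n. y i) * (\<Sum>i=1..Suc n. 1 / y i) = t * (P * H) + P"
  proof -
    have "(\<Prod>i=1..Suc n. y i) * (\<Sum>i=1..Suc n. 1 / y i) = (P * t) * (H + 1 / t)"
      unfolding P_def H_def t_def by simp
    also have "\<dots> = t * (P * H) + P" using t by (simp add: field_simps)
    finally show ?thesis .
  qed
  have S: "(\<Sum>i=1..Suc n. y i) = s + t" unfolding s_def t_def by simp
  have R: "real (Suc n) * ((\<Sum>i=1..Suc n. y i) / real (Suc n)) ^ (Suc n - 1) = (n + 1) * ((s + t) / (n + 1)) ^ n"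
  proof -
    have e: "real (Suc n) = real (n + 1)" by simp
    show ?thesis unfolding S diff_Suc_1 e ..
  qed
  have c1: "t * (P * H) \<le> t * (n * a ^ (n - 1))" using IH t by simp
  have c2: "(n + 1) * (a ^ (n - 1) * b) \<le> (n + 1) * ((s + t) / (n + 1)) ^ n"
    using A2 M by (simp add: mult_left_mono)
  have main: "t * (P * H) + P \<le> (n + 1) * ((s + t) / (n + 1)) ^ n"
    using c1 c2 AG E1 by linarith
  show ?case
  proof
    show "(\<Prod>i=1..Suc n. y i) * (\<Sum>i=1..Suc n. 1 / y i) \<le> real (Suc n) * ((\<Sum>i=1..Suc n. y i) / real (Suc n)) ^ (Suc n - 1)"
      unfolding L R using main .
    show "3 \<le> Suc n \<and> (\<Prod>i=1..Suc n. y i) * (\<Sum>i=1..Suc n. 1 / y i) = real (Suc n) * ((\<Sum>i=1..Suc n. y i) / real (Suc n)) ^ (Suc n - 1) \<longrightarrow>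
      (\<forall>i\<in>{1..Suc n}. y i = (\<Sum>i=1..Suc n. y i) / real (Suc n))"
    proof
      assume "3 \<le> Suc n \<and> (\<Prod>i=1..Suc n. y i) * (\<Sum>i=1..Suc n. 1 / y i) = real (Suc n) * ((\<Sum>i=1..Suc n. y i) / real (Suc n)) ^ (Suc n - 1)"
      hence eq: "t * (P * H) + P = (n + 1) * ((s + t) / (n + 1)) ^ n" unfolding L R by simp
      have "P = a ^ n" using eq c1 c2 AG E1 by linarith
      hence ya: "\<forall>i\<in>{1..n}. y i = a" using AGe by simp
      have "(n + 1) * (a ^ (n - 1) * b) = (n + 1) * ((s + t) / (n + 1)) ^ n"
        using eq c1 c2 AG E1 by linarith
      hence "a ^ (n - 1) * b = (((n - 1) * a + b) / n) ^ n" using M by simp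
      hence "a = b" by (rule A2e)
      hence ta: "t = a" unfolding b_def using Suc.hyps by (simp add: field_simps)
      have sa: "(s + t) / (n + 1) = a" using ta Suc.hyps unfolding a_def by (simp add: field_simps)
      show "\<forall>i\<in>{1..Suc n}. y i = (\<Sum>i=1..Suc n. y i) / real (Suc n)"
        unfolding S using ya ta sa t_def by (auto simp: le_Suc_eq add.commute)
    qed
  qed
qed

lemma auxeq: "(N::real) > 0 \<Longrightarrow> P > 0 \<Longrightarrow> ((1 / N) * S = P) = (1 / P * S = N)"
  by (auto simp: field_simps)

theorem lemma4p4:
  fixes n :: nat and x :: "nat \<Rightarrow> real"
  assumes "n \<ge> 2"
    and "\<And>i. i \<in> {1..n} \<Longrightarrow> x i > 0"
    and "(1 / real n) * (\<Sum>i=1..n. 1 / x i) = 1"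
  shows "(1 / real n) * (\<Sum>i=1..n. x i) \<le> (\<Prod>i=1..n. x i)
    \<and> (n \<ge> 3 \<longrightarrow>
          ((1 / real n) * (\<Sum>i=1..n. x i) = (\<Prod>i=1..n. x i) \<longleftrightarrow> (\<forall>i\<in>{1..n}. x i = 1)))
    \<and> (n = 2 \<longrightarrow> (1 / real n) * (\<Sum>i=1..n. x i) = (\<Prod>i=1..n. x i))"
proof -
  define y where "y = (\<lambda>i. 1 / x i)"
  have ypos: "\<And>i. i \<in> {1..n} \<Longrightarrow> y i > 0" using assms(2) unfolding y_def by auto
  have n0: "real n > 0" using assms(1) by simp
  have sy: "(\<Sum>i=1..n. y i) = n" using assms(3) n0 unfolding y_def by (simp add: field_simps)
  have Px: "(\<Prod>i=1..n. x i) > 0" using assms(2) by (intro prod_pos) auto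
  have Py: "(\<Prod>i=1..n. y i) = 1 / (\<Prod>i=1..n. x i)" unfolding y_def by (simp add: prod_dividef)
  have Hy: "(\<Sum>i=1..n. 1 / y i) = (\<Sum>i=1..n. x i)" unfolding y_def by simp
  have R1: "real n * ((\<Sum>i=1..n. y i) / real n) ^ (n - 1) = n" unfolding sy using n0 by simp
  note MLem = mainlem[of n y, OF assms(1) ypos, unfolded Py Hy R1]
  have key: "(1 / real n) * (\<Sum>i=1..n. x i) \<le> (\<Prod>i=1..n. x i) \<longleftrightarrow>
      1 / (\<Prod>i=1..n. x i) * (\<Sum>i=1..n. x i) \<le> n"
    using n0 Px by (simp add: field_simps)
  have keye: "(1 / real n) * (\<Sum>i=1..n. x i) = (\<Prod>i=1..n. x i) \<longleftrightarrow>
      1 / (\<Prod>i=1..n. x i) * (\<Sum>i=1..n. x i) = n"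
    by (rule auxeq[OF n0 Px])
  have part1: "(1 / real n) * (\<Sum>i=1..n. x i) \<le> (\<Prod>i=1..n. x i)"
    using MLem key by simp
  have part2: "n \<ge> 3 \<longrightarrow>
          ((1 / real n) * (\<Sum>i=1..n. x i) = (\<Prod>i=1..n. x i) \<longleftrightarrow> (\<forall>i\<in>{1..n}. x i = 1))"
  proof (intro impI iffI)
    assume n3: "n \<ge> 3" and eq: "(1 / real n) * (\<Sum>i=1..n. x i) = (\<Prod>i=1..n. x i)"
    have "\<forall>i\<in>{1..n}. y i = (\<Sum>i=1..n. y i) / n" using MLem n3 eq keye by blast
    hence "\<forall>i\<in>{1..n}. y i = 1" unfolding sy using n0 by simp
    thus "\<forall>i\<in>{1..n}. x i = 1" unfolding y_def by simp
  next
    assume "\<forall>i\<in>{1..n}. x i = 1"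
    hence "(\<Sum>i=1..n. x i) = n" "(\<Prod>i=1..n. x i) = 1" by simp_all
    thus "(1 / real n) * (\<Sum>i=1..n. x i) = (\<Prod>i=1..n. x i)" using n0 by simp
  qed
  have part3: "n = 2 \<longrightarrow> (1 / real n) * (\<Sum>i=1..n. x i) = (\<Prod>i=1..n. x i)"
  proof
    assume n2: "n = 2"
    have e: "{1..2::nat} = {1, 2}" by auto
    have x: "x 1 > 0" "x 2 > 0" using assms(2) n2 by auto
    have "1 / x 1 + 1 / x 2 = 2" using assms(3) unfolding n2 e by simp
    hence "x 1 + x 2 = 2 * (x 1 * x 2)" using x by (simp add: field_simps)
    thus "(1 / real n) * (\<Sum>i=1..n. x i) = (\<Prod>i=1..n. x i)" unfolding n2 e by simp
  qed
  show ?thesis using part1 part2 part3 by blast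
qed

end
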